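(* Let $(X,P,o)$ be a generalized parametric metric space such that $P$ satisfies (P5) and $o$ is continuous. Then $(X,\tau_P)$ is first countable; more precisely, for each $x\in X$ the family $\{B(x,\tfrac1n,\tfrac1n): n\in\mathbb{N}\}$ is a local base at $x$.
   Context: A binary operation $o:[0,\infty)\times[0,\infty)\to[0,\infty)$ (written $\alpha\, o\, \beta$) is assumed to satisfy, for all $\alpha,\beta,\gamma\in[0,\infty)$: (a) $\alpha\, o\, 0=\alpha$; (b) $\alpha\le\beta\implies \alpha\, o\,\gamma\le\beta\, o\,\gamma$; (c) $\alpha\, o\,\gamma=\gamma\, o\,\alpha$; (d) $\alpha\, o\,(\beta\, o\,\gamma)=(\alpha\, o\,\beta)\, o\,\gamma$. It is continuous if whenever $\alpha_n\to\alpha$ and $\beta_n\to\beta$ in $[0,\infty)$ we have $\alpha_n\, o\,\beta_n\to\alpha\, o\,\beta$. A generalized parametric metric on a nonempty set $X$ is a function $P:X\times X\times(0,\infty)\to[0,\infty)$ such that: (P1) $P(a,b,t)=0$ for all $t>0$ if and only if $a=b$; (P2) $P(a,b,t)=P(b,a,t)$ for all $a,b\in X$, $t>0$; (P3) $P(a,b,s+t)\le P(a,x,s)\, o\, P(b,x,t)$ for all $s,t>0$ and $a,b,x\in X$. The triple $(X,P,o)$ is a generalized parametric metric space. Condition (P5): for all $a,b\in X$, the map $t\mapsto P(a,b,t)$ is continuous on $(0,\infty)$. Open ball: $B(a,\alpha,t)=\{b\in X: P(a,b,t)<\alpha\}$. $\tau_P$ is the topology consisting of all $A\subseteq X$ such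 that for every $a\in A$ there exist $\alpha>0,t>0$ with $B(a,\alpha,t)\subseteq A$. *)

theory Defs
  imports "HOL-Analysis.Analysis"
begin

definition is_op :: "(real \<Rightarrow> real \<Rightarrow> real) \<Rightarrow> bool" where
  "is_op opr \<longleftrightarrow>
     (\<forall>\<alpha>\<ge>0. \<forall>\<beta>\<ge>0. opr \<alpha> \<beta> \<ge> 0) \<and>
     (\<forall>\<alpha>\<ge>0. opr \<alpha> 0 = \<alpha>) \<and>
     (\<forall>\<alpha>\<ge>0. \<forall>\<beta>\<ge>0. \<forall>\<gamma>\<ge>0. \<alpha> \<le> \<beta> \<longrightarrow> opr \<alpha> \<gamma> \<le> opr \<beta> \<gamma>) \<and>
     (\<forall>\<alpha>\<ge>0. \<forall>\<gamma>\<ge>0. opr \<alpha> \<gamma> = opr \<gamma> \<alpha>) \<and>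
     (\<forall>\<alpha>\<ge>0. \<forall>\<beta>\<ge>0. \<forall>\<gamma>\<ge>0. opr \<alpha> (opr \<beta> \<gamma>) = opr (opr \<alpha> \<beta>) \<gamma>)"

definition op_continuous :: "(real \<Rightarrow> real \<Rightarrow> real) \<Rightarrow> bool" where
  "op_continuous opr \<longleftrightarrow>
     (\<forall>a b (\<alpha>::real) (\<beta>::real). (\<forall>n. a n \<ge> 0 \<and> b n \<ge> 0) \<and> \<alpha> \<ge> 0 \<and> \<beta> \<ge> 0 \<and>
        a \<longlonglongrightarrow> \<alpha> \<and> b \<longlonglongrightarrow> \<beta> \<longrightarrow> (\<lambda>n. opr (a n) (b n)) \<longlonglongrightarrow> opr \<alpha> \<beta>)"

text \<open>Generalized parametric metric on the whole type 'a (the nonempty set X).\<close>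
definition gen_param_metric :: "('a \<Rightarrow> 'a \<Rightarrow> real \<Rightarrow> real) \<Rightarrow> (real \<Rightarrow> real \<Rightarrow> real) \<Rightarrow> bool" where
  "gen_param_metric P opr \<longleftrightarrow>
     (\<forall>a b t. t > 0 \<longrightarrow> P a b t \<ge> 0) \<and>
     (\<forall>a b. (\<forall>t>0. P a b t = 0) \<longleftrightarrow> a = b) \<and>
     (\<forall>a b t. t > 0 \<longrightarrow> P a b t = P b a t) \<and>
     (\<forall>a b x s t. s > 0 \<and> t > 0 \<longrightarrow> P a b (s + t) \<le> opr (P a x s) (P b x t))"

definition P5 :: "('a \<Rightarrow> 'a \<Rightarrow> real \<Rightarrow> real) \<Rightarrow> bool" where
  "P5 P \<longleftrightarrow> (\<forall>a b. continuous_on {0<..} (P a b))"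

definition Pball :: "('a \<Rightarrow> 'a \<Rightarrow> real \<Rightarrow> real) \<Rightarrow> 'a \<Rightarrow> real \<Rightarrow> real \<Rightarrow> 'a set" where
  "Pball P a \<alpha> t = {b. P a b t < \<alpha>}"

definition tauP :: "('a \<Rightarrow> 'a \<Rightarrow> real \<Rightarrow> real) \<Rightarrow> 'a set set" where
  "tauP P = {A. \<forall>a\<in>A. \<exists>\<alpha>>0. \<exists>t>0. Pball P a \<alpha> t \<subseteq> A}"

definition first_countable_tau :: "'a set set \<Rightarrow> bool" where
  "first_countable_tau T \<longleftrightarrow>
     (\<forall>x. \<exists>\<B>. countable \<B> \<and> \<B> \<subseteq> T \<and>
        (\<forall>U\<in>T. x \<in> U \<longrightarrow> (\<exists>V\<in>\<B>. x \<in> V \<and> V \<subseteq> U)))"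

end

theory Submission
  imports Defs
begin

lemma op_nn: assumes "is_op opr" "0 \<le> a" "0 \<le> b" shows "0 \<le> opr a b"
  using conjunct1[OF assms(1)[unfolded is_op_def]] assms(2,3) by blast
lemma op_zero: assumes "is_op opr" "0 \<le> a" shows "opr a 0 = a"
  using conjunct1[OF conjunct2[OF assms(1)[unfolded is_op_def]]] assms(2) by blast
lemma op_mono: assumes "is_op opr" "0 \<le> a" "0 \<le> b" "0 \<le> c" "a \<le> b" shows "opr a c \<le> opr b c"
  using conjunct1[OF conjunct2[OF conjunct2[OF assms(1)[unfolded is_op_def]]]] assms(2-5) by blast
lemma op_comm: assumes "is_op opr" "0 \<le> a" "0 \<le> b" shows "opr a b = opr b a"
  using conjunct1[OF conjunct2[OF conjunct2[OF conjunct2[OF assms(1)[unfolded is_op_def]]]]] assms(2,3) by blast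
lemma gp_nn: assumes "gen_param_metric P opr" "0 < t" shows "0 \<le> P a b t"
  using conjunct1[OF assms(1)[unfolded gen_param_metric_def]] assms(2) by blast
lemma gp_self: assumes "gen_param_metric P opr" "0 < t" shows "P a a t = 0"
  using conjunct1[OF conjunct2[OF assms(1)[unfolded gen_param_metric_def]]] assms(2) by blast
lemma gp_sym: assumes "gen_param_metric P opr" "0 < t" shows "P a b t = P b a t"
  using conjunct1[OF conjunct2[OF conjunct2[OF assms(1)[unfolded gen_param_metric_def]]]] assms(2) by blast
lemma gp_tri: assumes "gen_param_metric P opr" "0 < s" "0 < t" shows "P a b (s + t) \<le> opr (P a x s) (P b x t)"
  using conjunct2[OF conjunct2[OF conjunct2[OF assms(1)[unfolded gen_param_metric_def]]]] assms(2,3) by blast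

lemma P_mono_t:
  assumes op: "is_op opr" and g: "gen_param_metric P opr" and s: "0 < s" "s \<le> t"
  shows "P a b t \<le> P a b s"
proof (cases "s = t")
  case True then show ?thesis by simp
next
  case False
  then have r: "t - s > 0" using s by simp
  have "P a b (s + (t - s)) \<le> opr (P a b s) (P b b (t - s))"
    using gp_tri[OF g s(1) r] .
  moreover have "P b b (t - s) = 0" using gp_self[OF g r] .
  moreover have "P a b s \<ge> 0" using gp_nn[OF g s(1)] .
  ultimately show ?thesis using op_zero[OF op] by simp
qed

lemma op_small:
  assumes op: "is_op opr" and oc: "op_continuous opr" and b: "0 \<le> \<beta>" "\<beta> < e"
  shows "\<exists>\<delta>>0. opr \<beta> \<delta> < e"
proof -
  have "(\<lambda>m. opr ((\<lambda>_. \<beta>) m) ((\<lambda>m. inverse (real (Suc m))) m)) \<longlonglongrightarrow> opr \<beta> 0"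
    apply (rule oc[unfolded op_continuous_def, rule_format])
    using b LIMSEQ_inverse_real_of_nat by auto
  moreover have "opr \<beta> 0 = \<beta>" using op_zero[OF op b(1)] .
  ultimately have "eventually (\<lambda>m. opr \<beta> (inverse (real (Suc m))) < e) sequentially"
    using b order_tendstoD(2)[of _ "opr \<beta> 0" sequentially e] by simp
  then obtain m where "opr \<beta> (inverse (real (Suc m))) < e"
    by (meson eventually_sequentially order_refl)
  moreover have "inverse (real (Suc m)) > 0" by simp
  ultimately show ?thesis by blast
qed

lemma ball_open:
  assumes op: "is_op opr" and oc: "op_continuous opr" and g: "gen_param_metric P opr"
    and p5: "P5 P" and t0: "0 < t0"
  shows "Pball P x e t0 \<in> tauP P"
  unfolding tauP_def
proof (clarify)
  fix b assume bb: "b \<in> Pball P x e t0"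
  then have lt: "P x b t0 < e" by (simp add: Pball_def)
  have co: "continuous_on {0<..} (P x b)" using p5 unfolding P5_def by blast
  have "\<forall>B. open B \<longrightarrow> open ({0<..} \<inter> P x b -` B)"
    using co continuous_on_open_vimage[of "{0<..}" "P x b"] open_greaterThan[of 0] by (simp add: Int_commute)
  then have op1: "open ({0<..} \<inter> P x b -` {..<e})" using open_lessThan[of e] by blast
  have t0in: "t0 \<in> {0<..} \<inter> P x b -` {..<e}" using t0 lt by simp
  obtain \<epsilon> where ep: "\<epsilon> > 0" "ball t0 \<epsilon> \<subseteq> {0<..} \<inter> P x b -` {..<e}"
    using open_contains_ball[THEN iffD1, OF op1, rule_format, OF t0in] by blast
  define s where "s = t0 - min (\<epsilon>/2) (t0/2)"
  have "dist t0 s < \<epsilon>" using ep t0 by (simp add: s_def dist_real_def)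
  then have "s \<in> ball t0 \<epsilon>" by simp
  then have "s \<in> {0<..} \<inter> P x b -` {..<e}" using ep(2) by blast
  then have s1: "s > 0" "P x b s < e" by auto
  have s2: "t0 - s > 0" using ep t0 by (simp add: s_def)
  have bnn: "P x b s \<ge> 0" using gp_nn[OF g s1(1)] .
  obtain \<delta> where d: "\<delta> > 0" "opr (P x b s) \<delta> < e" using op_small[OF op oc bnn s1(2)] by blast
  have "Pball P b \<delta> (t0 - s) \<subseteq> Pball P x e t0"
  proof
    fix c assume "c \<in> Pball P b \<delta> (t0 - s)"
    then have c: "P b c (t0 - s) < \<delta>" by (simp add: Pball_def)
    have sym: "P c b (t0 - s) = P b c (t0 - s)" using gp_sym[OF g s2] .
    have cnn: "P c b (t0 - s) \<ge> 0" using gp_nn[OF g s2] .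
    have "P x c (s + (t0 - s)) \<le> opr (P x b s) (P c b (t0 - s))"
      using gp_tri[OF g s1(1) s2] .
    also have "\<dots> = opr (P c b (t0 - s)) (P x b s)" using op_comm[OF op bnn cnn] .
    also have "\<dots> \<le> opr \<delta> (P x b s)" using op_mono[OF op cnn _ bnn, of \<delta>] d c sym by simp
    also have "\<dots> = opr (P x b s) \<delta>" using op_comm[OF op _ bnn, of \<delta>] d by simp
    finally show "c \<in> Pball P x e t0" using d by (simp add: Pball_def)
  qed
  then show "\<exists>\<alpha>>0. \<exists>t>0. Pball P b \<alpha> t \<subseteq> Pball P x e t0" using d s2 by blast
qed

theorem mainTheorem12:
  fixes P :: "'a \<Rightarrow> 'a \<Rightarrow> real \<Rightarrow> real" and opr :: "real \<Rightarrow> real \<Rightarrow> real"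
  assumes "is_op opr" and "op_continuous opr"
    and "gen_param_metric P opr" and "P5 P"
  shows "first_countable_tau (tauP P) \<and>
    (\<forall>x. (\<forall>n::nat. n \<ge> 1 \<longrightarrow>
            Pball P x (1 / real n) (1 / real n) \<in> tauP P \<and> x \<in> Pball P x (1 / real n) (1 / real n)) \<and>
         (\<forall>U\<in>tauP P. x \<in> U \<longrightarrow>
            (\<exists>n::nat. n \<ge> 1 \<and> Pball P x (1 / real n) (1 / real n) \<subseteq> U)))"
proof -
  have A: "Pball P x (1 / real n) (1 / real n) \<in> tauP P \<and> x \<in> Pball P x (1 / real n) (1 / real n)"
    if "n \<ge> 1" for x n
  proof
    show "Pball P x (1 / real n) (1 / real n) \<in> tauP P"
      using ball_open[OF assms] that by simp
    have "P x x (1 / real n) = 0" using gp_self[OF assms(3)] that by simp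
    then show "x \<in> Pball P x (1 / real n) (1 / real n)" using that by (simp add: Pball_def)
  qed
  have B: "\<exists>n::nat. n \<ge> 1 \<and> Pball P x (1 / real n) (1 / real n) \<subseteq> U"
    if UU: "U \<in> tauP P" "x \<in> U" for x U
  proof -
    obtain \<alpha> t where at: "\<alpha> > 0" "t > 0" "Pball P x \<alpha> t \<subseteq> U"
      using UU unfolding tauP_def by blast
    obtain n::nat where n: "inverse (real (Suc n)) < min \<alpha> t"
      using reals_Archimedean at by (metis min_less_iff_conj)
    have "Pball P x (1 / real (Suc n)) (1 / real (Suc n)) \<subseteq> Pball P x \<alpha> t"
    proof
      fix b assume "b \<in> Pball P x (1 / real (Suc n)) (1 / real (Suc n))"
      then have "P x b (1 / real (Suc n)) < 1 / real (Suc n)" by (simp add: Pball_def)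
      moreover have "P x b t \<le> P x b (1 / real (Suc n))"
        using P_mono_t[OF assms(1) assms(3), of "1 / real (Suc n)" t] n
        by (simp add: inverse_eq_divide)
      ultimately show "b \<in> Pball P x \<alpha> t" using n by (simp add: Pball_def inverse_eq_divide)
    qed
    then show ?thesis using at(3) by (intro exI[of _ "Suc n"]) auto
  qed
  have C: "first_countable_tau (tauP P)"
    unfolding first_countable_tau_def
  proof
    fix x
    let ?B = "(\<lambda>n::nat. Pball P x (1 / real n) (1 / real n)) ` {1..}"
    have "countable ?B" by simp
    moreover have "?B \<subseteq> tauP P" using A by auto
    moreover have "\<forall>U\<in>tauP P. x \<in> U \<longrightarrow> (\<exists>V\<in>?B. x \<in> V \<and> V \<subseteq> U)"
    proof (intro ballI impI)
      fix U assume "U \<in> tauP P" "x \<in> U"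
      then obtain n::nat where "n \<ge> 1" "Pball P x (1 / real n) (1 / real n) \<subseteq> U" using B by blast
      then show "\<exists>V\<in>?B. x \<in> V \<and> V \<subseteq> U" using A[of n x] by auto
    qed
    ultimately show "\<exists>\<B>. countable \<B> \<and> \<B> \<subseteq> tauP P \<and>
        (\<forall>U\<in>tauP P. x \<in> U \<longrightarrow> (\<exists>V\<in>\<B>. x \<in> V \<and> V \<subseteq> U))" by blast
  qed
  show ?thesis
  proof (intro conjI allI impI ballI)
    show "first_countable_tau (tauP P)" by (rule C)
  next
    fix x and n :: nat assume "1 \<le> n"
    then show "Pball P x (1 / real n) (1 / real n) \<in> tauP P" using A by blast
  next
    fix x and n :: nat assume "1 \<le> n"
    then show "x \<in> Pball P x (1 / real n) (1 / real n)" using A by blast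
  next
    fix x U assume "U \<in> tauP P" "x \<in> U"
    then show "\<exists>n::nat. n \<ge> 1 \<and> Pball P x (1 / real n) (1 / real n) \<subseteq> U" by (rule B)
  qed
qed

end
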